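(* Let $X$ be a path-connected finite down-wide poset and let $f\colon X\to\mathbb R$ be an injective Morse function satisfying the Exclusion condition. Let $a<b$ and suppose the interval $(a,b]$ contains no critical values of $f$ and contains exactly one regular value $e=f(y)$. Then there exists $z\in X_a$ with $z\prec y$ or $y\prec z$.
   Context: A finite poset is regarded as a finite $T_0$-space whose open sets are down-sets; $U_x=\{y: y\le x\}$. Write $a\prec b$ if $a<b$ and there is no $c$ with $a<c<b$. $X$ is down-wide if $\#\{y:y\prec x\}\ge2$ for every non-minimal $x$. A Morse function on $X$ is a map $f\colon X\to\mathbb R$ such that for every $x$, $\#\{y: x\prec y,\ f(x)\ge f(y)\}\le1$ and $\#\{w: w\prec x,\ f(w)\ge f(x)\}\le 1$; $x$ is critical if both sets are empty, regular otherwise; critical (regular) values are images of critical (regular) points. $f$ satisfies the Exclusion condition if for every regular $x$ exactly one of the two sets is nonempty. For $t\in\mathbb R$, $X_t=\bigcup_{f(x)\le t}U_x$. *)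

theory Defs
  imports "HOL-Analysis.Analysis"
begin

text \<open>A finite poset is modelled by a type of class order with finite universe.
  Its (Alexandrov) topology has the down-sets as open sets.\<close>

definition down_set :: "('a::order) set \<Rightarrow> bool" where
  "down_set U \<longleftrightarrow> (\<forall>x\<in>U. \<forall>y. y \<le> x \<longrightarrow> y \<in> U)"

lemma istopology_down_set: "istopology (down_set :: ('a::order) set \<Rightarrow> bool)"
  unfolding istopology_def down_set_def by blast

definition poset_topology :: "('a::order) topology" where
  "poset_topology = topology down_set"

lemma openin_poset_topology: "openin (poset_topology :: ('a::order) topology) U \<longleftrightarrow> down_set U"
  unfolding poset_topology_def by (metis istopology_down_set topology_inverse')

definition covers :: "'a::order \<Rightarrow> 'a \<Rightarrow> bool" where
  "covers a b \<longleftrightarrow> a < b \<and> \<not> (\<exists>c. a < c \<and> c < b)"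

definition down_wide :: "'a::order itself \<Rightarrow> bool" where
  "down_wide _ \<longleftrightarrow> (\<forall>x::'a. (\<exists>y. y < x) \<longrightarrow> card {y. covers y x} \<ge> 2)"

definition up_set_f :: "('a::order \<Rightarrow> real) \<Rightarrow> 'a \<Rightarrow> 'a set" where
  "up_set_f f x = {y. covers x y \<and> f x \<ge> f y}"

definition down_set_f :: "('a::order \<Rightarrow> real) \<Rightarrow> 'a \<Rightarrow> 'a set" where
  "down_set_f f x = {w. covers w x \<and> f w \<ge> f x}"

definition morse :: "('a::order \<Rightarrow> real) \<Rightarrow> bool" where
  "morse f \<longleftrightarrow> (\<forall>x. card (up_set_f f x) \<le> 1 \<and> card (down_set_f f x) \<le> 1)"

definition critical :: "('a::order \<Rightarrow> real) \<Rightarrow> 'a \<Rightarrow> bool" where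
  "critical f x \<longleftrightarrow> up_set_f f x = {} \<and> down_set_f f x = {}"

definition regular :: "('a::order \<Rightarrow> real) \<Rightarrow> 'a \<Rightarrow> bool" where
  "regular f x \<longleftrightarrow> \<not> critical f x"

definition exclusion :: "('a::order \<Rightarrow> real) \<Rightarrow> bool" where
  "exclusion f \<longleftrightarrow> (\<forall>x. regular f x \<longrightarrow>
      ((up_set_f f x \<noteq> {}) \<noteq> (down_set_f f x \<noteq> {})))"

definition critical_values :: "('a::order \<Rightarrow> real) \<Rightarrow> real set" where
  "critical_values f = f ` {x. critical f x}"

definition regular_values :: "('a::order \<Rightarrow> real) \<Rightarrow> real set" where
  "regular_values f = f ` {x. regular f x}"

definition sublevel :: "('a::order \<Rightarrow> real) \<Rightarrow> real \<Rightarrow> 'a set" where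
  "sublevel f t = (\<Union>x\<in>{x. f x \<le> t}. {y. y \<le> x})"

end

theory Submission
  imports Defs
begin

theorem mainTheorem9:
  fixes f :: "'a::order \<Rightarrow> real" and a b :: real and y :: 'a
  assumes "finite (UNIV :: 'a set)"
    and "path_connected_space (poset_topology :: 'a topology)"
    and "down_wide TYPE('a)"
    and "inj f" and "morse f" and "exclusion f"
    and "a < b"
    and "critical_values f \<inter> {a<..b} = {}"
    and "regular_values f \<inter> {a<..b} = {f y}"
    and "regular f y"
  shows "\<exists>z\<in>sublevel f a. covers z y \<or> covers y z"
proof -
  have "f y \<in> {a<..b}" using assms(9) by (metis Int_iff insertI1)
  hence fy: "f y \<le> b" by simp
  have key: "z \<in> sublevel f a" if "f z < f y" for z
  proof -
    have "f z \<le> a"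
    proof (rule ccontr)
      assume "\<not> f z \<le> a"
      hence zin: "f z \<in> {a<..b}" using that fy by auto
      show False
      proof (cases "critical f z")
        case True
        hence "f z \<in> critical_values f" unfolding critical_values_def by blast
        thus False using zin assms(8) by blast
      next
        case False
        hence "f z \<in> regular_values f" unfolding regular_values_def regular_def by blast
        hence "f z = f y" using zin assms(9) by blast
        thus False using that by simp
      qed
    qed
    thus ?thesis unfolding sublevel_def by blast
  qed
  show ?thesis
  proof (cases "\<exists>w. w < y")
    case True
    hence c2: "card {w. covers w y} \<ge> 2" using assms(3) unfolding down_wide_def by blast
    have fin1: "finite {w. covers w y}" using assms(1) by (rule finite_subset[OF subset_UNIV])
    have "\<exists>w1 w2. w1 \<in> {w. covers w y} \<and> w2 \<in> {w. covers w y} \<and> w1 \<noteq> w2"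
    proof (rule ccontr)
      assume "\<not> ?thesis"
      hence "card {w. covers w y} \<le> Suc 0" using card_le_Suc0_iff_eq[OF fin1] by blast
      thus False using c2 by simp
    qed
    then obtain w1 w2 where w: "w1 \<in> {w. covers w y}" "w2 \<in> {w. covers w y}" "w1 \<noteq> w2"
      by blast
    have fin: "finite (down_set_f f y)" using assms(1) by (rule finite_subset[OF subset_UNIV])
    have "card (down_set_f f y) \<le> 1" using assms(5) unfolding morse_def by blast
    hence "\<not> (w1 \<in> down_set_f f y \<and> w2 \<in> down_set_f f y)"
      using card_le_Suc0_iff_eq[OF fin] w(3) by auto
    then obtain w where "w \<in> {w1, w2}" "w \<notin> down_set_f f y" by blast
    hence cw: "covers w y" and nw: "\<not> f w \<ge> f y" using w unfolding down_set_f_def by auto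
    have "f w < f y" using nw by simp
    thus ?thesis using key cw by blast
  next
    case False
    hence "down_set_f f y = {}" unfolding down_set_f_def covers_def by blast
    hence "up_set_f f y \<noteq> {}" using assms(10) unfolding regular_def critical_def by blast
    then obtain z where z: "covers y z" "f y \<ge> f z" unfolding up_set_f_def by blast
    have "z \<noteq> y" using z(1) unfolding covers_def by auto
    hence "f z \<noteq> f y" using assms(4) by (meson injD)
    hence "f z < f y" using z(2) by simp
    thus ?thesis using key z(1) by blast
  qed
qed

end
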